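(* Fix a class $c$. Let $D_c$ (positive samples) and $D_{\lnot c}$ (negative samples) be probability distributions on an input space, let $P(c),P(\lnot c)>0$ be the prior probabilities of label $c$ and of "not $c$", and set $\alpha_c=\frac{P(\lnot c)}{P(c)}$. Let $s_c$ be a score function with values in $[0,1]$, and let $r_c(t)=P_{x\sim D_c}(s_c(x)>t)$ be the recall, assumed (standing assumption) to be a strictly decreasing bijection from $[0,1]$ onto $[0,1]$, with inverse $r_c^{-1}$. Define the probabilistic average precision $$ap_c=\int_0^1 \frac{\beta}{\beta+\alpha_c\, P_{x'\sim D_{\lnot c}}\big(s_c(x')>r_c^{-1}(\beta)\big)}\,d\beta,$$ the detection error $\mathcal{L}^{\mathrm{Det}}_c=1-ap_c$, and the pairwise ranking error $R_c=P_{(x,x')\sim D_c\times D_{\lnot c}}\big(s_c(x)<s_c(x')\big)$ (with $x,x'$ independent). Then $$\alpha_c\log\left(\frac{1+\alpha_c}{1+\alpha_c-R_c}\right)\le \mathcal{L}^{\mathrm{Det}}_c\le \min\left(\sqrt{\tfrac{2}{3}\alpha_c R_c},\ 1-\frac{8}{9}\cdot\frac{1}{1+2\alpha_c R_c}\right).$$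
   Context: This is a probabilistic model of object detection for a single class $c$: $D_c$ is the distribution of candidate detections that are true objects of class $c$, $D_{\lnot c}$ the distribution of candidates that are not, and $s_c(x)$ is the detector's confidence score for class $c$. $\log$ is the natural logarithm. *)

theory Defs
  imports "HOL-Probability.Probability"
begin

definition recall :: "'a measure \<Rightarrow> ('a \<Rightarrow> real) \<Rightarrow> real \<Rightarrow> real" where
  "recall Dc s t = prob_space.prob Dc {x \<in> space Dc. s x > t}"

definition ap :: "'a measure \<Rightarrow> 'a measure \<Rightarrow> real \<Rightarrow> ('a \<Rightarrow> real) \<Rightarrow> real" where
  "ap Dc Dnc \<alpha> s =
     (LBINT \<beta>:{0..1}.
        \<beta> / (\<beta> + \<alpha> * prob_space.prob Dnc
                 {x' \<in> space Dnc. s x' > the_inv_into {0..1} (recall Dc s) \<beta>}))"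

definition det_error :: "'a measure \<Rightarrow> 'a measure \<Rightarrow> real \<Rightarrow> ('a \<Rightarrow> real) \<Rightarrow> real" where
  "det_error Dc Dnc \<alpha> s = 1 - ap Dc Dnc \<alpha> s"

definition ranking_error :: "'a measure \<Rightarrow> 'a measure \<Rightarrow> ('a \<Rightarrow> real) \<Rightarrow> real" where
  "ranking_error Dc Dnc s =
     measure (Dc \<Otimes>\<^sub>M Dnc) {p \<in> space (Dc \<Otimes>\<^sub>M Dnc). s (fst p) < s (snd p)}"

end

theory Submission
  imports Defs
begin


lemma ftc_int:
  fixes f F :: "real \<Rightarrow> real"
  assumes "a \<le> b" "continuous_on {a..b} f" "continuous_on {a..b} F"
    "\<And>x. a < x \<Longrightarrow> x < b \<Longrightarrow> (F has_real_derivative f x) (at x)"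
  shows "(LBINT x:{a..b}. f x) = F b - F a"
proof -
  have "(f has_integral (F b - F a)) {a..b}"
    using fundamental_theorem_of_calculus_interior[OF assms(1) assms(3), of f] assms(4)
    by (simp add: has_real_derivative_iff_has_vector_derivative[symmetric])
  moreover have "(LBINT x:{a..b}. f x) = integral {a..b} f"
    using set_borel_integral_eq_integral(2)[OF borel_integrable_atLeastAtMost'[OF assms(2)]] by simp
  ultimately show ?thesis by (simp add: integral_unique)
qed

lemma si_bdd:
  fixes G :: "real \<Rightarrow> real"
  assumes "G \<in> borel_measurable borel" "\<And>x. x \<in> {a..b} \<Longrightarrow> \<bar>G x\<bar> \<le> C" "C \<ge> 0"
  shows "set_integrable lborel {a..b} G"
  unfolding set_integrable_def
proof (rule Bochner_Integration.integrable_bound[where f="\<lambda>x. C * indicator {a..b} x"])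
  show "integrable lborel (\<lambda>x. C * indicator {a..b} x)"
    using borel_integrable_atLeastAtMost[of a b "\<lambda>_. C"] by simp
  show "(\<lambda>x. indicator {a..b} x *\<^sub>R G x) \<in> borel_measurable lborel"
    using assms(1) by measurable
  show "AE x in lborel. norm (indicator {a..b} x *\<^sub>R G x) \<le> norm (C * indicator {a..b} x)"
    using assms(2,3) by (auto simp: indicator_def)
qed

lemma int_one: "(LBINT x:{0..1::real}. (1::real)) = 1"
proof -
  have "(LBINT x:{0..1::real}. (1::real)) = 1 - 0"
    by (rule ftc_int[of 0 1 "\<lambda>_. 1" "\<lambda>x. x"]) (auto intro!: continuous_intros derivative_eq_intros)
  then show ?thesis by simp
qed

lemma int_id: "(LBINT x:{0..1::real}. x) = 1/2"
proof -
  have "(LBINT x:{0..1::real}. x) = 1^2/2 - 0^2/2"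
    by (rule ftc_int[of 0 1 "\<lambda>x. x" "\<lambda>x. x^2/2"]) (auto intro!: continuous_intros derivative_eq_intros)
  then show ?thesis by simp
qed

lemma int_sqrt: "(LBINT x:{0..1::real}. sqrt x) = 2/3"
proof -
  have "(LBINT x:{0..1::real}. sqrt x) = 2/3 * 1 * sqrt 1 - 2/3 * 0 * sqrt 0"
  proof (rule ftc_int)
    fix x :: real assume "0 < x" "x < 1"
    then show "((\<lambda>x. 2/3 * x * sqrt x) has_real_derivative sqrt x) (at x)"
      by (auto intro!: derivative_eq_intros simp: field_simps)
  qed (auto intro!: continuous_intros)
  then show ?thesis by simp
qed

lemma int_ln:
  fixes a \<alpha> :: real assumes "0 \<le> a" "a \<le> 1" "\<alpha> > 0"
  shows "(LBINT x:{a..1}. \<alpha> / (x + \<alpha>)) = \<alpha> * (ln (1 + \<alpha>) - ln (a + \<alpha>))"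
proof -
  have "(LBINT x:{a..1}. \<alpha> / (x + \<alpha>)) = \<alpha> * ln (1 + \<alpha>) - \<alpha> * ln (a + \<alpha>)"
  proof (rule ftc_int)
    fix x :: real assume "a < x" "x < 1"
    then show "((\<lambda>x. \<alpha> * ln (x + \<alpha>)) has_real_derivative \<alpha> / (x + \<alpha>)) (at x)"
      using assms by (auto intro!: derivative_eq_intros simp: field_simps)
  qed (use assms in \<open>auto intro!: continuous_intros\<close>)
  then show ?thesis by (simp add: algebra_simps)
qed

lemma int_G:
  fixes l :: real assumes lp: "l > 0"
  shows "(LBINT x:{0..1/l}. (1 - sqrt (l * x))^2) = 1 / (6 * l)"
proof -
  define c where "c = sqrt l"
  have cp: "c > 0" and c2: "c * c = l" unfolding c_def using lp by simp_all
  define F where "F x = x - 4/3 * c * (x * sqrt x) + l * x^2 / 2" for x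
  have "(LBINT x:{0..1/l}. (1 - sqrt (l * x))^2) = F (1/l) - F 0"
  proof (rule ftc_int)
    show "0 \<le> 1 / l" using lp by simp
    show "continuous_on {0..1/l} (\<lambda>x. (1 - sqrt (l * x))^2)" by (intro continuous_intros)
    show "continuous_on {0..1/l} F" unfolding F_def by (intro continuous_intros) simp
    fix x :: real assume x: "0 < x" "x < 1/l"
    define s where "s = sqrt x"
    have sp: "s > 0" and s2: "s * s = x" unfolding s_def using x by simp_all
    have d: "(F has_real_derivative (1 - 4/3 * c * (1 * sqrt x + x * (inverse (sqrt x) / 2)) + l * (2 * x) / 2)) (at x)"
      unfolding F_def using x
      by (auto intro!: derivative_eq_intros)
    have e1: "x * (inverse (sqrt x) / 2) = s / 2"
      unfolding s_def[symmetric] using sp s2[symmetric] by (simp add: divide_simps)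
    have e1': "x * inverse s = s"
    proof -
      have "x * inverse s = s * (s * inverse s)" using s2 by (simp add: mult.assoc)
      also have "\<dots> = s" using sp by simp
      finally show ?thesis .
    qed
    have e2: "sqrt (l * x) = c * s" unfolding c_def s_def by (simp add: real_sqrt_mult)
    have "1 - 4/3 * c * (1 * sqrt x + x * (inverse (sqrt x) / 2)) + l * (2 * x) / 2 = 1 - 2 * c * s + l * x"
      unfolding e1 s_def[symmetric] using e1' by simp
    also have "\<dots> = (1 - sqrt (l * x))^2" unfolding e2 power2_eq_square
      using c2 s2 by (simp add: algebra_simps)
    finally show "(F has_real_derivative (1 - sqrt (l * x))^2) (at x)" using d by simp
  qed
  also have "F (1/l) - F 0 = 1 / (6 * l)"
  proof -
    have sq: "sqrt (1/l) = 1 / c" unfolding c_def by (simp add: real_sqrt_divide)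
    have "F (1/l) = 1/l - 4/3 * c * (1/l * (1/c)) + l * (1/l)^2 / 2" unfolding F_def sq ..
    also have "\<dots> = 1/l - 4/3 * (1/l) + 1/l / 2" using cp lp by (simp add: power2_eq_square)
    also have "\<dots> = 1 / (6 * l)" by simp
    finally show ?thesis unfolding F_def by simp
  qed
  finally show ?thesis .
qed



lemma amgm: fixes a b m :: real assumes "a \<ge> 0" "b \<ge> 0" "m > 0"
  shows "2 * sqrt (a * b) \<le> m * a + b / m"
proof -
  have "4 * (a * b) \<le> (m * a + b / m)^2"
  proof -
    have "(m * a + b / m)^2 - 4 * (a * b) = (m * a - b / m)^2"
      using assms by (simp add: power2_eq_square field_simps)
    then show ?thesis by (metis diff_ge_0_iff_ge zero_le_power2)
  qed
  then have "sqrt (4 * (a * b)) \<le> m * a + b / m"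
    using assms by (intro real_le_lsqrt) auto
  then show ?thesis by (simp add: real_sqrt_mult)
qed

lemma pt_low:
  fixes b q \<alpha> :: real assumes "0 \<le> b" "0 \<le> q" "q \<le> 1" "\<alpha> > 0"
  shows "b / (b + \<alpha> * q) + q * (\<alpha> / (b + \<alpha>)) \<le> 1"
proof (cases "b = 0")
  case True then show ?thesis using assms by simp
next
  case False
  then have bp: "b > 0" using assms by simp
  have "q * (\<alpha> / (b + \<alpha>)) \<le> \<alpha> * q / (b + \<alpha> * q)"
  proof -
    have "\<alpha> * q \<le> \<alpha>" using assms by simp
    have p1: "b + \<alpha> > 0" using assms bp by simp
    have p2: "b + \<alpha> * q > 0" using assms bp by (simp add: add_pos_nonneg)
    have "\<alpha> * q / (b + \<alpha>) \<le> \<alpha> * q / (b + \<alpha> * q)"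
      using \<open>\<alpha> * q \<le> \<alpha>\<close> assms by (intro divide_left_mono) (auto intro: mult_pos_pos[OF p1 p2])
    then show ?thesis by (simp add: mult.commute[of q \<alpha>])
  qed
  moreover have "b / (b + \<alpha> * q) + \<alpha> * q / (b + \<alpha> * q) = 1"
  proof -
    have "b + \<alpha> * q > 0" using assms bp by (simp add: add_pos_nonneg)
    then show ?thesis by (simp add: add_divide_distrib[symmetric])
  qed
  ultimately show ?thesis by linarith
qed

lemma pt_sqrt:
  fixes b h l :: real assumes "0 \<le> b" "0 \<le> h" "l > 0"
  shows "1 - b / (b + h) - l * h \<le> indicator {0..1/l} b * (1 - sqrt (l * b))^2"
proof (cases "b = 0")
  case True then show ?thesis using assms by (simp add: indicator_def)
next
  case False
  then have bp: "b > 0" using assms by simp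
  have bh: "b + h > 0" using bp assms by simp
  have e: "1 - b / (b + h) = h / (b + h)"
  proof -
    have "1 - b / (b + h) = (b + h) / (b + h) - b / (b + h)" using bh by simp
    also have "\<dots> = h / (b + h)" by (simp only: diff_divide_distrib[symmetric] add_diff_cancel_left')
    finally show ?thesis .
  qed
  show ?thesis
  proof (cases "l * b \<le> 1")
    case False
    then have lb1: "1 < b * l" by (simp add: mult.commute)
    then have "1 / l < b" using pos_divide_less_eq[OF assms(3)] by simp
    then have ind: "indicator {0..1/l} b = (0::real)" by (simp add: indicator_def)
    have "h / (b + h) \<le> h / b" using bp assms by (intro divide_left_mono) auto
    also have "h / b \<le> l * h"
    proof -
      have "h * 1 \<le> h * (b * l)" using lb1 assms(2) by (intro mult_left_mono) auto
      then have "h \<le> l * h * b" by (simp add: ac_simps)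
      then show ?thesis using pos_divide_le_eq[OF bp] by simp
    qed
    finally show ?thesis using e ind by simp
  next
    case True
    then have "b * l \<le> 1" by (simp add: mult.commute)
    then have "b \<le> 1 / l" using pos_le_divide_eq[OF assms(3)] by simp
    then have ind: "indicator {0..1/l} b = (1::real)" using bp by (simp add: indicator_def)
    define t where "t = sqrt (l * b)"
    have lb: "0 \<le> l * b" by (rule mult_nonneg_nonneg[OF less_imp_le[OF assms(3)] assms(1)])
    have t2: "t^2 = l * b" unfolding t_def by (rule real_sqrt_pow2[OF lb])
    have key: "0 \<le> (1 - t)^2 * b - 2 * t * (1 - t) * h + l * h^2"
    proof -
      have "b * ((1 - t)^2 * b - 2 * t * (1 - t) * h + l * h^2) = ((1 - t) * b - t * h)^2 + h^2 * (l * b - t^2)"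
        by (simp add: power2_eq_square algebra_simps)
      also have "\<dots> = ((1 - t) * b - t * h)^2" using t2 by simp
      finally have "0 \<le> b * ((1 - t)^2 * b - 2 * t * (1 - t) * h + l * h^2)" by simp
      then show ?thesis using bp by (simp add: zero_le_mult_iff)
    qed
    have "h / (b + h) - l * h \<le> (1 - t)^2"
    proof -
      have eq: "(1-t)^2*(b+h) - (h - l*h*(b+h)) = (1-t)^2*b - 2*t*(1-t)*h + l*h^2 + h*(l*b - t^2)"
        by (simp add: algebra_simps power2_eq_square)
      have "h*(l*b - t^2) = 0" using t2 by simp
      then have "h - l * h * (b + h) \<le> (1 - t)^2 * (b + h)"
        using key eq by linarith
      then have "(h - l * h * (b + h)) / (b + h) \<le> (1 - t)^2 * (b + h) / (b + h)"
        using bh by (intro divide_right_mono) auto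
      moreover have "(h - l * h * (b + h)) / (b + h) = h / (b + h) - l * h"
        using bh by (simp add: field_simps)
      moreover have "(1 - t)^2 * (b + h) / (b + h) = (1 - t)^2" using bh by simp
      ultimately show ?thesis by simp
    qed
    then show ?thesis using e ind unfolding t_def by simp
  qed
qed



lemma restr_int:
  fixes g :: "real \<Rightarrow> real" assumes "0 \<le> a"
  shows "(LBINT b:{0..1}. indicator {a..1} b * g b) = (LBINT b:{a..1}. g b)"
  unfolding set_lebesgue_integral_def
  by (rule Bochner_Integration.integral_cong) (use assms in \<open>auto simp: indicator_def\<close>)

lemma main_ineq:
  fixes Q :: "real \<Rightarrow> real" and \<alpha> R :: real
  assumes Qm: "Q \<in> borel_measurable borel" and Qb: "\<And>b. b \<in> {0..1} \<Longrightarrow> 0 \<le> Q b \<and> Q b \<le> 1"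
    and QR: "(LBINT b:{0..1}. Q b) = R" and ap: "\<alpha> > 0" and R0: "0 \<le> R" and R1: "R \<le> 1"
  shows "\<alpha> * ln ((1 + \<alpha>) / (1 + \<alpha> - R)) \<le> 1 - (LBINT b:{0..1}. b / (b + \<alpha> * Q b))
     \<and> 1 - (LBINT b:{0..1}. b / (b + \<alpha> * Q b)) \<le>
         min (sqrt (2/3 * \<alpha> * R)) (1 - 8/9 * (1 / (1 + 2 * \<alpha> * R)))"
proof -
  define A where "A = (LBINT b:{0..1}. b / (b + \<alpha> * Q b))"
  define g where "g b = b / (b + \<alpha> * Q b)" for b
  have gm[measurable]: "g \<in> borel_measurable borel" unfolding g_def using Qm by measurable
  have [measurable]: "Q \<in> borel_measurable borel" using Qm .
  have gb: "0 \<le> g b \<and> g b \<le> 1" if "b \<in> {0..1}" for b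
  proof -
    have "0 \<le> \<alpha> * Q b" using Qb[OF that] ap by simp
    then show ?thesis using that unfolding g_def
      by (cases "b + \<alpha> * Q b = 0") (auto simp: divide_le_eq_1)
  qed
  have iQ: "set_integrable lborel {0..1} Q" by (rule si_bdd[where C=1]) (use Qb in auto)
  have ig: "set_integrable lborel {0..1} g" by (rule si_bdd[where C=1]) (use gb in auto)
  have i1: "set_integrable lborel {0..1::real} (\<lambda>_. 1::real)" by (rule si_bdd[where C=1]) auto
  have iid: "set_integrable lborel {0..1::real} (\<lambda>b. b)" by (rule si_bdd[where C=1]) auto
  have isq: "set_integrable lborel {0..1::real} (\<lambda>b. sqrt b)" by (rule si_bdd[where C=1]) auto
  have A_def': "A = (LBINT b:{0..1}. g b)" unfolding A_def g_def by simp
  define x where "x = \<alpha> * R"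
  have x0: "x \<ge> 0" unfolding x_def using ap R0 by simp

  have low: "\<alpha> * ln ((1 + \<alpha>) / (1 + \<alpha> - R)) \<le> 1 - A"
  proof -
    define a where "a = 1 - R"
    have a0: "0 \<le> a" "a \<le> 1" unfolding a_def using R0 R1 by auto
    define w where "w b = \<alpha> / (b + \<alpha>)" for b
    have wb: "0 \<le> w b \<and> w b \<le> 1" if "0 \<le> b" for b
      unfolding w_def using that ap by (auto simp: divide_le_eq_1)
    have wmono: "w c \<le> w b" if "0 \<le> b" "b \<le> c" for b c
      unfolding w_def using that ap by (intro divide_left_mono) auto
    define p1 where "p1 b = indicator {a..1} b * w b" for b
    define p2 where "p2 b = (Q b - indicator {a..1} b) * w a" for b
    have [measurable]: "w \<in> borel_measurable borel" unfolding w_def by measurable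
    have ip1: "set_integrable lborel {0..1} p1"
      by (rule si_bdd[where C=1]) (unfold p1_def, measurable, use wb in \<open>auto simp: indicator_def\<close>)
    have ip2: "set_integrable lborel {0..1} (\<lambda>b. Q b - indicator {a..1} b)"
      by (rule si_bdd[where C=1]) (measurable, use Qb in \<open>auto simp: indicator_def\<close>)
    have pt: "g b + p1 b + p2 b \<le> 1" if b: "b \<in> {0..1}" for b
    proof -
      have base: "g b + Q b * w b \<le> 1" unfolding g_def w_def using pt_low[of b "Q b" \<alpha>] Qb[OF b] ap b by auto
      show ?thesis
      proof (cases "a \<le> b")
        case True
        then have "(Q b - 1) * w a \<le> (Q b - 1) * w b"
          using wmono[of a b] Qb[OF b] a0 by (intro mult_left_mono_neg) auto
        then show ?thesis using True b base unfolding p1_def p2_def by (auto simp: indicator_def algebra_simps)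
      next
        case False
        then have "Q b * w a \<le> Q b * w b"
          using wmono[of b a] Qb[OF b] b by (intro mult_left_mono) auto
        then show ?thesis using False b base unfolding p1_def p2_def by (auto simp: indicator_def)
      qed
    qed
    have "(LBINT b:{0..1}. g b + p1 b + p2 b) \<le> (LBINT b:{0..1::real}. 1)"
      by (rule set_integral_mono) (use ig ip1 ip2 i1 pt in \<open>auto simp: p2_def\<close>)
    moreover have "(LBINT b:{0..1}. g b + p1 b + p2 b) = A + (LBINT b:{0..1}. p1 b) + (LBINT b:{0..1}. p2 b)"
    proof -
      have ip2': "set_integrable lborel {0..1} p2" unfolding p2_def
        using ip2 by (simp add: set_integrable_mult_left)
      show ?thesis using ig ip1 ip2' A_def' by (simp add: set_integral_add)
    qed
    moreover have "(LBINT b:{0..1}. p1 b) = \<alpha> * (ln (1 + \<alpha>) - ln (a + \<alpha>))"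
    proof -
      have "(LBINT b:{0..1}. p1 b) = (LBINT b:{a..1}. w b)" unfolding p1_def by (rule restr_int[OF a0(1)])
      also have "\<dots> = \<alpha> * (ln (1 + \<alpha>) - ln (a + \<alpha>))" unfolding w_def by (rule int_ln[OF a0 ap])
      finally show ?thesis .
    qed
    moreover have "(LBINT b:{0..1}. p2 b) = 0"
    proof -
      have "(LBINT b:{0..1::real}. indicator {a..1} b) = (LBINT b:{a..1::real}. (1::real))"
        using restr_int[OF a0(1), of "\<lambda>_. 1"] by simp
      also have "\<dots> = 1 - a"
        using ftc_int[of a 1 "\<lambda>_. 1" "\<lambda>x. x"] a0 by (auto intro!: continuous_intros derivative_eq_intros)
      finally have e: "(LBINT b:{0..1::real}. indicator {a..1} b) = 1 - a" .
      have ii: "set_integrable lborel {0..1::real} (indicator {a..1} :: real \<Rightarrow> real)"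
        by (rule si_bdd[where C=1]) (auto simp: indicator_def)
      have "(LBINT b:{0..1}. p2 b) = (LBINT b:{0..1}. Q b - indicator {a..1} b) * w a"
        unfolding p2_def by simp
      also have "\<dots> = (R - (1 - a)) * w a"
        using set_integral_diff(2)[OF iQ ii] QR e by simp
      finally show ?thesis unfolding a_def by simp
    qed
    ultimately have f1: "A + \<alpha> * (ln (1 + \<alpha>) - ln (a + \<alpha>)) \<le> 1" using int_one by simp
    have "ln ((1 + \<alpha>) / (1 + \<alpha> - R)) = ln (1 + \<alpha>) - ln (a + \<alpha>)"
      unfolding a_def using ap R1 by (subst ln_div) (auto simp: algebra_simps)
    then have "\<alpha> * ln ((1 + \<alpha>) / (1 + \<alpha> - R)) = \<alpha> * (ln (1 + \<alpha>) - ln (a + \<alpha>))" by simp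
    then show ?thesis using f1 by linarith
  qed

  have lam: "1 - A \<le> l * x + 1 / (6 * l)" if l: "l > 0" for l
  proof -
    define G where "G b = (1 - sqrt (l * b))^2" for b
    have [measurable]: "G \<in> borel_measurable borel" unfolding G_def by measurable
    have iH: "set_integrable lborel {0..1} (\<lambda>b. indicator {0..1/l} b * G b)"
    proof (rule si_bdd[where C=1])
      fix b :: real assume b: "b \<in> {0..1}"
      show "\<bar>indicator {0..1/l} b * G b\<bar> \<le> 1"
      proof (cases "b \<le> 1/l")
        case True
        then have "l * b \<le> 1" using l by (simp add: field_simps)
        then have "sqrt (l * b) \<le> 1" by simp
        moreover have "0 \<le> sqrt (l * b)" using l b by simp
        ultimately have "G b \<le> 1" unfolding G_def by (simp add: power_le_one abs_le_iff)
        then show ?thesis using True b by (simp add: indicator_def G_def)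
      qed (simp add: indicator_def)
    qed (auto)
    have "(LBINT b:{0..1}. 1 - g b - l * \<alpha> * Q b) \<le> (LBINT b:{0..1}. indicator {0..1/l} b * G b)"
    proof (rule set_integral_mono)
      show "set_integrable lborel {0..1} (\<lambda>b. 1 - g b - l * \<alpha> * Q b)"
        using i1 ig iQ by (intro set_integral_diff(1) set_integrable_mult_right) auto
      show "set_integrable lborel {0..1} (\<lambda>b. indicator {0..1/l} b * G b)" by (rule iH)
      fix b :: real assume b: "b \<in> {0..1}"
      show "1 - g b - l * \<alpha> * Q b \<le> indicator {0..1/l} b * G b"
        using pt_sqrt[of b "\<alpha> * Q b" l] b Qb[OF b] ap l unfolding g_def G_def by (simp add: mult.assoc)
    qed
    also have "\<dots> \<le> (LBINT b:{0..1/l}. G b)"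
      unfolding set_lebesgue_integral_def
    proof (rule integral_mono)
      show "integrable lborel (\<lambda>b. indicator {0..1} b *\<^sub>R (indicator {0..1/l} b * G b))"
        using iH unfolding set_integrable_def .
      have "continuous_on {0..1/l} G" unfolding G_def by (intro continuous_intros)
      from borel_integrable_atLeastAtMost'[OF this]
      show "integrable lborel (\<lambda>b. indicator {0..1/l} b *\<^sub>R G b)"
        unfolding set_integrable_def .
      fix b :: real show "indicator {0..1} b *\<^sub>R (indicator {0..1/l} b * G b) \<le> indicator {0..1/l} b *\<^sub>R G b"
        by (auto simp: indicator_def G_def)
    qed
    also have "\<dots> = 1 / (6 * l)" unfolding G_def by (rule int_G[OF l])
    finally have "(LBINT b:{0..1}. 1 - g b - l * \<alpha> * Q b) \<le> 1 / (6 * l)" .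
    moreover have "(LBINT b:{0..1}. 1 - g b - l * \<alpha> * Q b) = 1 - A - l * x"
    proof -
      have "(LBINT b:{0..1}. 1 - g b - l * \<alpha> * Q b) = (LBINT b:{0..1::real}. (1::real)) - (LBINT b:{0..1}. g b) - (LBINT b:{0..1}. l * \<alpha> * Q b)"
        using i1 ig iQ by (simp add: set_integral_diff set_integrable_mult_right)
      then show ?thesis using int_one A_def' QR unfolding x_def by simp
    qed
    ultimately show ?thesis by simp
  qed
  have up1: "1 - A \<le> sqrt (2/3 * \<alpha> * R)"
  proof (cases "x = 0")
    case True
    have "1 - A \<le> 0"
    proof (rule ccontr)
      assume "\<not> 1 - A \<le> 0"
      then have d: "1 - A > 0" by simp
      have "1 - A \<le> 1 / (6 * (1 / (1 - A)))" using lam[of "1 / (1 - A)"] d True by simp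
      then show False using d by simp
    qed
    moreover have "0 \<le> sqrt (2/3 * \<alpha> * R)" using ap R0 by simp
    ultimately show ?thesis by linarith
  next
    case False
    then have xp: "x > 0" using x0 by simp
    define S where "S = sqrt (2/3 * x)"
    have Sp: "S > 0" unfolding S_def using xp by simp
    have S2: "S^2 = 2/3 * x" unfolding S_def using xp by simp
    have "1 - A \<le> (1 / (3 * S)) * x + 1 / (6 * (1 / (3 * S)))" using lam[of "1 / (3 * S)"] Sp by simp
    also have "\<dots> = S"
    proof -
      have "x = 3/2 * S^2" using S2 by simp
      then show ?thesis using Sp by (simp add: field_simps power2_eq_square)
    qed
    finally show ?thesis unfolding S_def x_def by (simp add: mult.assoc)
  qed

  have up2: "1 - A \<le> 1 - 8/9 * (1 / (1 + 2 * \<alpha> * R))"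
  proof -
    define m where "m = 3 * (1 + 2 * x) / 4"
    have mp: "m > 0" unfolding m_def using x0 by simp
    have "(LBINT b:{0..1::real}. sqrt b) \<le> (LBINT b:{0..1}. m / 2 * g b + 1 / (2 * m) * b + \<alpha> / (2 * m) * Q b)"
    proof (rule set_integral_mono)
      show "set_integrable lborel {0..1::real} (\<lambda>b. sqrt b)" by (rule isq)
      show "set_integrable lborel {0..1} (\<lambda>b. m / 2 * g b + 1 / (2 * m) * b + \<alpha> / (2 * m) * Q b)"
        using ig iid iQ by (intro set_integral_add(1) set_integrable_mult_right) auto
      fix b :: real assume b: "b \<in> {0..1}"
      define c where "c = b + \<alpha> * Q b"
      have c0: "c \<ge> 0" unfolding c_def using b Qb[OF b] ap by simp
      have gc: "g b * c = b"
      proof (cases "c = 0")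
        case True then have "b = 0" unfolding c_def using b Qb[OF b] ap by (smt (verit) mult_nonneg_nonneg atLeastAtMost_iff)
        then show ?thesis using True by simp
      qed (simp add: g_def c_def)
      have "2 * sqrt (g b * c) \<le> m * g b + c / m" using amgm[of "g b" c m] gb[OF b] c0 mp by simp
      then show "sqrt b \<le> m / 2 * g b + 1 / (2 * m) * b + \<alpha> / (2 * m) * Q b"
        using gc mp unfolding c_def by (simp add: field_simps)
    qed
    also have "\<dots> = m / 2 * A + 1 / (2 * m) * (1/2) + \<alpha> / (2 * m) * R"
    proof -
      have "(LBINT b:{0..1}. m / 2 * g b + 1 / (2 * m) * b + \<alpha> / (2 * m) * Q b)
          = (LBINT b:{0..1}. m / 2 * g b) + (LBINT b:{0..1}. 1 / (2 * m) * b) + (LBINT b:{0..1}. \<alpha> / (2 * m) * Q b)"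
        using ig iid iQ by (simp add: set_integral_add set_integrable_mult_right)
      then show ?thesis using A_def' int_id QR by simp
    qed
    finally have ineq: "2/3 \<le> m / 2 * A + 1 / (2 * m) * (1/2) + \<alpha> / (2 * m) * R" using int_sqrt by simp
    have pos: "1 + 2 * \<alpha> * R > 0" using ap R0 by (simp add: add_pos_nonneg)
    have "1 / (2 * m) * (1/2) + \<alpha> / (2 * m) * R = (1 + 2 * \<alpha> * R) / (4 * m)"
      using mp by (simp add: field_simps)
    also have "\<dots> = 1/3" using pos unfolding m_def x_def by (simp add: field_simps)
    finally have "1/3 \<le> m / 2 * A" using ineq by simp
    then have "2 / (3 * m) \<le> A" using mp by (simp add: field_simps)
    moreover have "2 / (3 * m) = 8/9 * (1 / (1 + 2 * \<alpha> * R))"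
      using pos unfolding m_def x_def by (simp add: field_simps)
    ultimately have "8/9 * (1 / (1 + 2 * \<alpha> * R)) \<le> A" by simp
    then show ?thesis by simp
  qed
  have fin: "\<alpha> * ln ((1 + \<alpha>) / (1 + \<alpha> - R)) \<le> 1 - A \<and> 1 - A \<le>
         min (sqrt (2/3 * \<alpha> * R)) (1 - 8/9 * (1 / (1 + 2 * \<alpha> * R)))"
    by (intro conjI min.boundedI low up1 up2)
  then show ?thesis unfolding A_def .
qed



theorem theorem2:
  fixes Dc Dnc :: "'a measure" and s :: "'a \<Rightarrow> real" and Pc Pnc \<alpha> :: real
  assumes "prob_space Dc" and "prob_space Dnc"
    and "sets Dnc = sets Dc"
    and "s \<in> borel_measurable Dc"
    and "\<And>x. x \<in> space Dc \<Longrightarrow> 0 \<le> s x \<and> s x \<le> 1"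
    and "Pc > 0" and "Pnc > 0" and "Pc + Pnc = 1"
    and "\<alpha> = Pnc / Pc"
    and "bij_betw (recall Dc s) {0..1} {0..1}"
    and "\<And>t1 t2. 0 \<le> t1 \<Longrightarrow> t1 < t2 \<Longrightarrow> t2 \<le> 1 \<Longrightarrow> recall Dc s t2 < recall Dc s t1"
  shows "\<alpha> * ln ((1 + \<alpha>) / (1 + \<alpha> - ranking_error Dc Dnc s)) \<le> det_error Dc Dnc \<alpha> s
       \<and> det_error Dc Dnc \<alpha> s \<le>
           min (sqrt (2/3 * \<alpha> * ranking_error Dc Dnc s))
               (1 - 8/9 * (1 / (1 + 2 * \<alpha> * ranking_error Dc Dnc s)))"
proof -
  interpret P: prob_space Dc by fact
  interpret N: prob_space Dnc by fact
  have spN: "space Dnc = space Dc" using assms(3) by (rule sets_eq_imp_space_eq)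
  have sP[measurable]: "s \<in> borel_measurable Dc" by fact
  have mc: "measurable Dnc borel = measurable Dc borel" by (rule measurable_cong_sets[OF assms(3) refl])
  have sN[measurable]: "s \<in> borel_measurable Dnc"
    using assms(4) unfolding mc .
  have sb: "0 \<le> s x \<and> s x \<le> 1" if "x \<in> space Dc" for x using assms(5) that .
  define r where "r = recall Dc s"
  have r_def': "r t = measure Dc {x \<in> space Dc. t < s x}" for t unfolding r_def recall_def by simp
  have rstrict: "r t2 < r t1" if "0 \<le> t1" "t1 < t2" "t2 \<le> 1" for t1 t2
    unfolding r_def using assms(11) that .
  have ranti: "r t2 \<le> r t1" if "t1 \<le> t2" for t1 t2
    unfolding r_def' using that by (intro P.finite_measure_mono) auto
  have r01: "0 \<le> r t \<and> r t \<le> 1" for t unfolding r_def' by simp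
  have "mono (\<lambda>t. - r t)" by (auto simp: mono_def ranti)
  from borel_measurable_uminus[OF borel_measurable_mono[OF this]]
  have rm[measurable]: "r \<in> borel_measurable borel" by simp
  have inj: "inj_on r {0..1}" and img: "r ` {0..1} = {0..1}"
    using assms(10) unfolding r_def bij_betw_def by auto
  have r0: "r 0 = 1"
  proof -
    obtain u where u: "u \<in> {0..1}" "r u = 1" using img by (metis atLeastAtMost_iff imageE order_refl zero_le_one)
    then have "r u \<le> r 0" using ranti[of 0 u] by simp
    then show ?thesis using u r01[of 0] by simp
  qed
  have atom: "measure Dc {x \<in> space Dc. t \<le> s x} = r t" if t: "t \<in> {0..1}" for t
  proof (cases "t = 0")
    case True
    have "{x \<in> space Dc. t \<le> s x} = space Dc" using sb True by auto
    then show ?thesis using True r0 P.prob_space by simp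
  next
    case False
    then have tp: "t > 0" using t by simp
    define p where "p = measure Dc {x \<in> space Dc. t \<le> s x}"
    have p1: "p \<le> 1" unfolding p_def by simp
    have pge: "r t \<le> p" unfolding r_def' p_def by (intro P.finite_measure_mono) auto
    show ?thesis
    proof (rule ccontr)
      assume "measure Dc {x \<in> space Dc. t \<le> s x} \<noteq> r t"
      then have lt: "r t < p" using pge unfolding p_def by simp
      define v where "v = (r t + p) / 2"
      have "v \<in> {0..1}" unfolding v_def using r01[of t] p1 lt by auto
      then obtain u where u: "u \<in> {0..1}" "r u = v" using img by (metis imageE)
      show False
      proof (cases "u < t")
        case True
        have "p \<le> r u" unfolding r_def' p_def using True by (intro P.finite_measure_mono) auto
        then show False using u lt unfolding v_def by simp
      next
        case False
        then have "r u \<le> r t" using ranti by simp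
        then show False using u lt unfolding v_def by simp
      qed
    qed
  qed
  have less: "measure Dc {x \<in> space Dc. s x < t} = 1 - r t" if t: "t \<in> {0..1}" for t
  proof -
    have "{x \<in> space Dc. s x < t} = space Dc - {x \<in> space Dc. t \<le> s x}" by auto
    then show ?thesis using P.prob_compl[of "{x \<in> space Dc. t \<le> s x}"] atom[OF t] by simp
  qed
  define Y where "Y y = r (s y)" for y
  have Ym[measurable]: "Y \<in> borel_measurable Dnc" unfolding Y_def by measurable
  have Yb: "0 \<le> Y y \<and> Y y \<le> 1" for y unfolding Y_def using r01 by simp

  define R where "R = ranking_error Dc Dnc s"
  define Rset where "Rset = {p \<in> space (Dc \<Otimes>\<^sub>M Dnc). s (fst p) < s (snd p)}"
  have Rsets: "Rset \<in> sets (Dc \<Otimes>\<^sub>M Dnc)" unfolding Rset_def by measurable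
  interpret PN: pair_sigma_finite Dc Dnc
    by (simp add: pair_sigma_finite_def P.sigma_finite_measure_axioms N.sigma_finite_measure_axioms)
  interpret PP: prob_space "Dc \<Otimes>\<^sub>M Dnc" by (rule prob_space_pair) fact+
  have R01: "0 \<le> R" "R \<le> 1" unfolding R_def ranking_error_def by simp_all
  have eR: "ennreal R = (\<integral>\<^sup>+y. ennreal (1 - Y y) \<partial>Dnc)"
  proof -
    have "ennreal R = emeasure (Dc \<Otimes>\<^sub>M Dnc) Rset"
      unfolding R_def ranking_error_def Rset_def by (simp add: PP.emeasure_eq_measure)
    also have "\<dots> = (\<integral>\<^sup>+y. emeasure Dc ((\<lambda>x. (x, y)) -` Rset) \<partial>Dnc)"
      by (rule PN.emeasure_pair_measure_alt2[OF Rsets])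
    also have "\<dots> = (\<integral>\<^sup>+y. ennreal (1 - Y y) \<partial>Dnc)"
    proof (rule nn_integral_cong)
      fix y assume y: "y \<in> space Dnc"
      have "(\<lambda>x. (x, y)) -` Rset = {x \<in> space Dc. s x < s y}"
        unfolding Rset_def using y by (auto simp: space_pair_measure)
      moreover have "s y \<in> {0..1}" using sb y spN by auto
      ultimately show "emeasure Dc ((\<lambda>x. (x, y)) -` Rset) = ennreal (1 - Y y)"
        using less unfolding Y_def by (simp add: P.emeasure_eq_measure)
    qed
    finally show ?thesis .
  qed

  define Q where "Q b = measure Dnc {y \<in> space Dnc. Y y < b}" for b
  have Qb: "0 \<le> Q b \<and> Q b \<le> 1" for b unfolding Q_def by simp
  have "mono Q" unfolding Q_def mono_def by (auto intro!: N.finite_measure_mono)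
  then have Qm[measurable]: "Q \<in> borel_measurable borel" by (rule borel_measurable_mono)
  have iQ: "set_integrable lborel {0..1} Q" by (rule si_bdd[where C=1]) (use Qb in auto)
  have eQ: "(\<integral>\<^sup>+b. ennreal (indicator {0..1} b * Q b) \<partial>lborel) = (\<integral>\<^sup>+y. ennreal (1 - Y y) \<partial>Dnc)"
  proof -
    interpret NL: pair_sigma_finite Dnc lborel
      by (simp add: pair_sigma_finite_def N.sigma_finite_measure_axioms lborel.sigma_finite_measure_axioms)
    define f where "f y b = ennreal (indicator {0..1} b * (if Y y < b then 1 else 0))" for y and b :: real
    have fm: "case_prod f \<in> borel_measurable (Dnc \<Otimes>\<^sub>M lborel)" unfolding f_def by measurable
    have "(\<integral>\<^sup>+b. ennreal (indicator {0..1} b * Q b) \<partial>lborel) = (\<integral>\<^sup>+b. (\<integral>\<^sup>+y. f y b \<partial>Dnc) \<partial>lborel)"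
    proof (rule nn_integral_cong)
      fix b :: real
      have "(\<integral>\<^sup>+y. f y b \<partial>Dnc) = (\<integral>\<^sup>+y. ennreal (indicator {0..1} b) * indicator {y \<in> space Dnc. Y y < b} y \<partial>Dnc)"
        by (rule nn_integral_cong) (auto simp: f_def indicator_def)
      also have "\<dots> = ennreal (indicator {0..1} b) * emeasure Dnc {y \<in> space Dnc. Y y < b}"
        by (rule nn_integral_cmult_indicator) measurable
      also have "\<dots> = ennreal (indicator {0..1} b * Q b)"
        unfolding Q_def by (simp add: N.emeasure_eq_measure ennreal_mult)
      finally show "ennreal (indicator {0..1} b * Q b) = (\<integral>\<^sup>+y. f y b \<partial>Dnc)" by simp
    qed
    also have "\<dots> = (\<integral>\<^sup>+y. (\<integral>\<^sup>+b. f y b \<partial>lborel) \<partial>Dnc)"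
      by (rule NL.Fubini'[OF fm])
    also have "\<dots> = (\<integral>\<^sup>+y. ennreal (1 - Y y) \<partial>Dnc)"
    proof (rule nn_integral_cong)
      fix y
      have "(\<integral>\<^sup>+b. f y b \<partial>lborel) = (\<integral>\<^sup>+b. indicator {Y y<..1} b \<partial>lborel)"
        using Yb[of y] by (intro nn_integral_cong) (auto simp: f_def indicator_def)
      also have "\<dots> = ennreal (1 - Y y)" using Yb[of y] by simp
      finally show "(\<integral>\<^sup>+b. f y b \<partial>lborel) = ennreal (1 - Y y)" .
    qed
    finally show ?thesis .
  qed
  have QR: "(LBINT b:{0..1}. Q b) = R"
  proof -
    have "(\<integral>\<^sup>+b. ennreal (indicator {0..1} b * Q b) \<partial>lborel) = ennreal (LBINT b:{0..1}. Q b)"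
      using iQ unfolding set_integrable_def set_lebesgue_integral_def
      by (subst nn_integral_eq_integral) (auto simp: Qb)
    then have "ennreal (LBINT b:{0..1}. Q b) = ennreal R" using eQ eR by simp
    moreover have "0 \<le> (LBINT b:{0..1}. Q b)"
      unfolding set_lebesgue_integral_def using Qb
      by (intro Bochner_Integration.integral_nonneg) (simp add: indicator_def)
    ultimately show ?thesis using R01 by simp
  qed

  have apQ: "ap Dc Dnc \<alpha> s = (LBINT b:{0..1}. b / (b + \<alpha> * Q b))"
    unfolding ap_def
  proof (rule set_lebesgue_integral_cong, simp, intro allI impI)
    fix b :: real assume b: "b \<in> {0..1}"
    define u where "u = the_inv_into {0..1} (recall Dc s) b"
    have u01: "u \<in> {0..1}" unfolding u_def r_def[symmetric]
      using the_inv_into_into[OF inj, of b "{0..1}"] img b by simp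
    have ru: "r u = b" unfolding u_def r_def[symmetric] using f_the_inv_into_f[OF inj] img b by auto
    have "{x' \<in> space Dnc. u < s x'} = {y \<in> space Dnc. Y y < b}"
    proof (intro Collect_cong conj_cong refl iffI)
      fix y assume y: "y \<in> space Dnc"
      then have sy: "0 \<le> s y" "s y \<le> 1" using sb spN by auto
      { assume "u < s y" then show "Y y < b" unfolding Y_def using rstrict[of u "s y"] u01 sy ru by auto }
      { assume "Y y < b" then show "u < s y" unfolding Y_def using ranti[of "s y" u] ru by force }
    qed
    then show "b / (b + \<alpha> * measure Dnc {x' \<in> space Dnc. the_inv_into {0..1} (recall Dc s) b < s x'})
             = b / (b + \<alpha> * Q b)" unfolding Q_def u_def by simp
  qed
  have ap: "\<alpha> > 0" using assms(6,7,9) by simp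
  have Qb': "\<And>b. b \<in> {0..1} \<Longrightarrow> 0 \<le> Q b \<and> Q b \<le> 1" using Qb by simp
  note main = main_ineq[OF Qm Qb' QR ap R01(1) R01(2)]
  show ?thesis using main unfolding det_error_def apQ R_def .
qed

end
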